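(* Let $h\in R$. Then for every $i\ge0$, the binary representation of $h$ does not end with the string $1(10)^i$.
   Context: Stern's sequence $(a(n))_{n\ge0}$: $a(0)=0$, $a(1)=1$, $a(2n)=a(n)$, $a(2n+1)=a(n)+a(n+1)$; $s(n)=a(n+1)$ for $n\ge0$. $R$ is the set of record-setters of $s$, i.e. indices $v\ge0$ with $s(i)<s(v)$ for all $i<v$. The binary representation of a positive integer has no leading zeros; $0$ is represented by the string $0$. $x^i$ denotes $i$-fold concatenation of the string $x$ ($x^0$ empty). *)

theory Defs
  imports Main "HOL-Library.Sublist"
begin

function stern :: "nat \<Rightarrow> nat" where
  "stern n = (if n = 0 then 0 else if n = 1 then 1
     else if even n then stern (n div 2) else stern (n div 2) + stern (n div 2 + 1))"
  by auto
termination by (relation "measure id") (auto, presburger)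

declare stern.simps[simp del]

definition s :: "nat \<Rightarrow> nat" where
  "s n = stern (n + 1)"

definition R :: "nat set" where
  "R = {v. \<forall>i<v. s i < s v}"

text \<open>Binary representation, most significant bit first, True = 1, False = 0;
  no leading zeros, and 0 is represented by the string 0.\<close>
fun bin :: "nat \<Rightarrow> bool list" where
  "bin n = (if n < 2 then [n = 1] else bin (n div 2) @ [odd n])"

declare bin.simps[simp del]

definition pat :: "nat \<Rightarrow> bool list" where
  "pat i = True # concat (replicate i [True, False])"

end

theory Submission
  imports Defs
begin

lemma stern_even: "stern (2*k) = stern k"
  by (cases "k = 0") (simp add: stern.simps, subst stern.simps, auto)

lemma stern_odd: "stern (2*k+1) = stern k + stern (k+1)"
proof (cases "k = 0")
  case True then show ?thesis by (simp add: stern.simps)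
next
  case False
  have "stern (2*k+1) = stern ((2*k+1) div 2) + stern ((2*k+1) div 2 + 1)"
    using False by (subst stern.simps) auto
  then show ?thesis by simp
qed

fun g :: "nat \<Rightarrow> nat \<Rightarrow> nat" where
  "g 0 n = n"
| "g (Suc i) n = 4 * g i n + 2"

fun PQ :: "nat \<Rightarrow> nat \<times> nat" where
  "PQ 0 = (1, 0)"
| "PQ (Suc i) = (fst (PQ i) + snd (PQ i), fst (PQ i) + 2 * snd (PQ i))"

lemma stern_g:
  "stern (g i n) = fst (PQ i) * stern n + snd (PQ i) * stern (n+1) \<and>
   stern (g i n + 1) = snd (PQ i) * stern n + (fst (PQ i) + snd (PQ i)) * stern (n+1)"
proof (induction i)
  case 0 then show ?case by simp
next
  case (Suc i)
  have e1: "4 * g i n + 2 = 2 * (2 * g i n + 1)" by simp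
  have e2: "4 * g i n + 2 + 1 = 2 * (2 * g i n + 1) + 1" by simp
  have a: "stern (4 * g i n + 2) = stern (g i n) + stern (g i n + 1)"
    unfolding e1 stern_even stern_odd by simp
  have b: "stern (4 * g i n + 2 + 1) = stern (g i n) + 2 * stern (g i n + 1)"
  proof -
    have "stern (4 * g i n + 2 + 1) = stern (2 * g i n + 1) + stern (2 * g i n + 1 + 1)"
      unfolding e2 stern_odd by simp
    also have "stern (2 * g i n + 1 + 1) = stern (g i n + 1)"
      using stern_even[of "g i n + 1"] by (simp add: algebra_simps)
    finally show ?thesis using stern_odd[of "g i n"] by simp
  qed
  show ?case using Suc a b by (simp add: algebra_simps)
qed

lemma g_closed: "g i n = 4^i * n + g i 0"
  by (induction i) (auto simp: algebra_simps)

lemma g0_less: "g i 0 < 4^i"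
  by (induction i) auto

lemma bin_len: "n < 2 \<Longrightarrow> bin n = [n = 1]"
  by (simp add: bin.simps)

lemma bin_ge: "n \<ge> 2 \<Longrightarrow> bin n = bin (n div 2) @ [odd n]"
  by (subst bin.simps) simp

lemma last_bin: "last (bin n) = odd n"
proof (cases "n < 2")
  case True then show ?thesis by (cases n) (auto simp: bin_len)
qed (auto simp: bin_ge)

lemma pat_Suc: "pat (Suc i) = pat i @ [True, False]"
  unfolding pat_def by (simp add: replicate_append_same[symmetric])

lemma suffix_pat_g: "suffix (pat i) (bin h) \<Longrightarrow> \<exists>m. h = g i (2*m+1)"
proof (induction i arbitrary: h)
  case 0
  then have "last (bin h) = True"
    unfolding pat_def by (auto simp: suffix_def)
  then have "odd h" by (simp add: last_bin)
  then show ?case by (metis g.simps(1) oddE)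
next
  case (Suc i)
  then obtain zs where z: "bin h = zs @ pat i @ [True, False]"
    by (auto simp: suffix_def pat_Suc)
  have h2: "h \<ge> 2"
  proof (rule ccontr)
    assume "\<not> h \<ge> 2"
    then have "length (bin h) = 1" by (simp add: bin_len)
    then show False using z by simp
  qed
  from z have z1: "bin (h div 2) @ [odd h] = (zs @ pat i @ [True]) @ [False]"
    using bin_ge[OF h2] by simp
  then have eh: "even h" and b1: "bin (h div 2) = zs @ pat i @ [True]" by auto
  have h4: "h div 2 \<ge> 2"
  proof (rule ccontr)
    assume "\<not> h div 2 \<ge> 2"
    then have "length (bin (h div 2)) = 1" by (simp add: bin_len)
    then show False using b1 by (simp add: pat_def)
  qed
  from b1 have "bin (h div 2 div 2) @ [odd (h div 2)] = (zs @ pat i) @ [True]"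
    using bin_ge[OF h4] by simp
  then have oh: "odd (h div 2)" and b2: "bin (h div 2 div 2) = zs @ pat i" by auto
  then have "suffix (pat i) (bin (h div 2 div 2))" by (simp add: suffix_def)
  then obtain m where m: "h div 2 div 2 = g i (2*m+1)" using Suc.IH by blast
  have "h = 4 * (h div 2 div 2) + 2" using eh oh by presburger
  then show ?case using m by auto
qed

theorem mainTheorem5:
  fixes h :: nat
  assumes "h \<in> R"
  shows "\<forall>i. \<not> suffix (pat i) (bin h)"
proof (intro allI notI)
  fix i assume "suffix (pat i) (bin h)"
  then obtain m where hm: "h = g i (2*m+1)" using suffix_pat_g by blast
  define j where "j = 2 * g i m"
  have jl: "j < h"
  proof -
    have "j = 2 * (4^i * m + g i 0)" unfolding j_def by (subst g_closed) simp
    moreover have "h = 4^i * (2*m+1) + g i 0" unfolding hm by (subst g_closed) simp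
    ultimately show ?thesis using g0_less[of i] by (simp add: algebra_simps)
  qed
  have sj: "s j = stern (g i m) + stern (g i m + 1)"
    unfolding s_def j_def using stern_odd by simp
  have sh: "s h = stern (g i (2*m+1) + 1)" unfolding s_def hm by simp
  have x1: "stern (2*m+1) = stern m + stern (m+1)" by (rule stern_odd)
  have x2: "stern (2*m+1+1) = stern (m+1)"
    using stern_even[of "m+1"] by (simp add: algebra_simps)
  have "s h \<le> s j"
    unfolding sj sh using stern_g[of i m] stern_g[of i "2*m+1"] x1 x2
    by (simp add: algebra_simps)
  moreover have "s j < s h" using assms jl unfolding R_def by blast
  ultimately show False by simp
qed

end
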